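(* Let $A\in\mathbb{R}^{m\times n}$ be semi-monotone, let $A=P_1-R_1+S_1$ be a double proper weak regular splitting and $A=P_2-R_2+S_2$ a double proper regular splitting of $A$. Suppose $N(S_2)\supseteq N(P_2)$, $R(S_2)\subseteq R(P_2)$, $1\notin\sigma(S_2P_1^{\dagger})$ and $\widehat{A}^{\dagger}\geq 0$, where $\widehat{A}=(I-S_2P_1^{\dagger})A$. If $P_1^{\dagger}R_1\geq P_2^{\dagger}R_2$ and $P_2^{\dagger}S_2\geq P_1^{\dagger}S_1$, then $\rho(W_{12})\leq\rho(T_1)<1$, where $$W_{12}=\begin{pmatrix} P_2^{\dagger}R_2-P_2^{\dagger}S_2P_1^{\dagger}R_1 & P_2^{\dagger}S_2P_1^{\dagger}S_1\\ I & 0\end{pmatrix},\qquad T_1=\begin{pmatrix} P_1^{\dagger}R_1 & -P_1^{\dagger}S_1\\ I&0\end{pmatrix}.$$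
   Context: For $M\in\mathbb{R}^{m\times n}$, $M^{\dagger}$ is its Moore–Penrose inverse, $R(M)$, $N(M)$ its range and null space; inequalities are entrywise; $\rho$ is the spectral radius, $\sigma$ the spectrum. $A$ is semi-monotone if $A^{\dagger}\geq 0$. A double splitting $A=P-R+S$ is a double proper splitting if $R(P)=R(A)$ and $N(P)=N(A)$; it is double proper regular if moreover $P^{\dagger}\geq0$, $R\geq0$, $S\leq0$; double proper weak regular if moreover $P^{\dagger}\geq 0$, $P^{\dagger}R\geq 0$, $P^{\dagger}S\leq 0$. *)

theory Defs
  imports "Jordan_Normal_Form.Spectral_Radius" "Jordan_Normal_Form.Matrix_Kernel"
begin

definition mat_le :: "real mat \<Rightarrow> real mat \<Rightarrow> bool" where
  "mat_le B C \<longleftrightarrow> dim_row B = dim_row C \<and> dim_col B = dim_col C \<and>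
     (\<forall>i < dim_row B. \<forall>j < dim_col B. B $$ (i,j) \<le> C $$ (i,j))"

definition nonneg_mat :: "real mat \<Rightarrow> bool" where
  "nonneg_mat M \<longleftrightarrow> (\<forall>i < dim_row M. \<forall>j < dim_col M. M $$ (i,j) \<ge> 0)"

definition nonpos_mat :: "real mat \<Rightarrow> bool" where
  "nonpos_mat M \<longleftrightarrow> (\<forall>i < dim_row M. \<forall>j < dim_col M. M $$ (i,j) \<le> 0)"

definition mat_range :: "real mat \<Rightarrow> real vec set" where
  "mat_range M = {M *\<^sub>v x | x. x \<in> carrier_vec (dim_col M)}"

definition moore_penrose :: "real mat \<Rightarrow> real mat \<Rightarrow> bool" where
  "moore_penrose M X \<longleftrightarrow> X \<in> carrier_mat (dim_col M) (dim_row M) \<and>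
     M * X * M = M \<and> X * M * X = X \<and>
     transpose_mat (M * X) = M * X \<and> transpose_mat (X * M) = X * M"

definition rspectrum :: "real mat \<Rightarrow> complex set" where
  "rspectrum M = spectrum (map_mat complex_of_real M)"

definition rho :: "real mat \<Rightarrow> real" where
  "rho M = spectral_radius (map_mat complex_of_real M)"

definition double_proper_splitting :: "real mat \<Rightarrow> real mat \<Rightarrow> real mat \<Rightarrow> real mat \<Rightarrow> bool" where
  "double_proper_splitting A P R S \<longleftrightarrow>
     P \<in> carrier_mat (dim_row A) (dim_col A) \<and> R \<in> carrier_mat (dim_row A) (dim_col A) \<and>
     S \<in> carrier_mat (dim_row A) (dim_col A) \<and> A = P - R + S \<and>
     mat_range P = mat_range A \<and> mat_kernel P = mat_kernel A"

definition double_proper_regular :: "real mat \<Rightarrow> real mat \<Rightarrow> real mat \<Rightarrow> real mat \<Rightarrow> real mat \<Rightarrow> bool" where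
  "double_proper_regular A P R S Pd \<longleftrightarrow> double_proper_splitting A P R S \<and> moore_penrose P Pd \<and>
     nonneg_mat Pd \<and> nonneg_mat R \<and> nonpos_mat S"

definition double_proper_weak_regular :: "real mat \<Rightarrow> real mat \<Rightarrow> real mat \<Rightarrow> real mat \<Rightarrow> real mat \<Rightarrow> bool" where
  "double_proper_weak_regular A P R S Pd \<longleftrightarrow> double_proper_splitting A P R S \<and> moore_penrose P Pd \<and>
     nonneg_mat Pd \<and> nonneg_mat (Pd * R) \<and> nonpos_mat (Pd * S)"

end

theory Submission
  imports Defs
begin

lemma sum_split_add: "(\<Sum>j<a+b. f j) = (\<Sum>j<a. f j) + (\<Sum>j<b. f (a + j))" for f :: "nat \<Rightarrow> 'a::comm_monoid_add"
  by (induct b) (auto simp: add.assoc)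

lemma cmat_mult_vec_index:
  fixes M :: "real mat"
  assumes M: "M \<in> carrier_mat N N" and v: "v \<in> carrier_vec N" and i: "i < N"
  shows "(map_mat complex_of_real M *\<^sub>v v) $ i = (\<Sum>j<N. complex_of_real (M $$ (i,j)) * v $ j)"
  using M v i by (auto simp: scalar_prod_def atLeast0LessThan intro!: sum.cong)

lemma rmat_mult_vec_index:
  fixes M :: "real mat"
  assumes M: "M \<in> carrier_mat N K" and v: "v \<in> carrier_vec K" and i: "i < N"
  shows "(M *\<^sub>v v) $ i = (\<Sum>j<K. M $$ (i,j) * v $ j)"
  using M v i by (auto simp: scalar_prod_def atLeast0LessThan intro!: sum.cong)

lemma eig_abs:
  fixes M :: "real mat"
  assumes M: "M \<in> carrier_mat N N" and nn: "nonneg_mat M"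
   and ev: "eigenvector (map_mat complex_of_real M) v \<mu>" and i: "i < N"
  shows "norm \<mu> * norm (v $ i) \<le> (\<Sum>j<N. M $$ (i,j) * norm (v $ j))"
proof -
  have v: "v \<in> carrier_vec N" using ev M unfolding eigenvector_def by auto
  have "(map_mat complex_of_real M *\<^sub>v v) $ i = \<mu> * v $ i" using ev i v M unfolding eigenvector_def by auto
  hence "\<mu> * v $ i = (\<Sum>j<N. complex_of_real (M $$ (i,j)) * v $ j)"
    using cmat_mult_vec_index[OF M v i] by simp
  hence "norm \<mu> * norm (v $ i) = norm (\<Sum>j<N. complex_of_real (M $$ (i,j)) * v $ j)"
    by (metis norm_mult)
  also have "\<dots> \<le> (\<Sum>j<N. norm (complex_of_real (M $$ (i,j)) * v $ j))" by (rule norm_sum)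
  also have "\<dots> = (\<Sum>j<N. M $$ (i,j) * norm (v $ j))"
  proof (rule sum.cong)
    fix j assume "j \<in> {..<N}"
    hence "M $$ (i,j) \<ge> 0" using nn M i unfolding nonneg_mat_def by auto
    thus "norm (complex_of_real (M $$ (i,j)) * v $ j) = M $$ (i,j) * norm (v $ j)"
      by (simp add: norm_mult)
  qed simp
  finally show ?thesis .
qed

lemma eig_upper:
  fixes M :: "real mat"
  assumes M: "M \<in> carrier_mat N N" and nn: "nonneg_mat M"
  and upos: "\<And>i. i<N \<Longrightarrow> u i > 0" and ub: "\<And>i. i<N \<Longrightarrow> (\<Sum>j<N. M$$(i,j) * u j) \<le> t * u i"
  and ev: "eigenvalue (map_mat complex_of_real M) \<mu>"
  shows "norm \<mu> \<le> t"
proof -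
  obtain v where evv: "eigenvector (map_mat complex_of_real M) v \<mu>" using ev unfolding eigenvalue_def by auto
  have v: "v \<in> carrier_vec N" and vnz: "v \<noteq> 0\<^sub>v N" using evv M unfolding eigenvector_def by auto
  obtain k where k: "k < N" "v $ k \<noteq> 0" using v vnz by (metis carrier_vecD eq_vecI index_zero_vec(1) index_zero_vec(2))
  define f where "f j = norm (v $ j) / u j" for j
  define \<tau> where "\<tau> = Max (f ` {..<N})"
  have fin: "finite (f ` {..<N})" by simp
  have ne: "f ` {..<N} \<noteq> {}" using k by auto
  obtain i where i: "i < N" "f i = \<tau>" using Max_in[OF fin ne] unfolding \<tau>_def by auto
  have le: "norm (v $ j) \<le> \<tau> * u j" if "j < N" for j
  proof -
    have "f j \<le> \<tau>" unfolding \<tau>_def using that by auto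
    thus ?thesis using upos[OF that] unfolding f_def by (simp add: divide_le_eq)
  qed
  have "f k > 0" unfolding f_def using k upos[OF k(1)] by auto
  moreover have "f k \<le> \<tau>" unfolding \<tau>_def using k fin by auto
  ultimately have tpos: "\<tau> > 0" by linarith
  have vi: "norm (v $ i) = \<tau> * u i" using i upos[OF i(1)] unfolding f_def by auto
  have "norm \<mu> * norm (v $ i) \<le> (\<Sum>j<N. M $$ (i,j) * norm (v $ j))" by (rule eig_abs[OF M nn evv i(1)])
  also have "\<dots> \<le> (\<Sum>j<N. M $$ (i,j) * (\<tau> * u j))"
  proof (rule sum_mono)
    fix j assume "j \<in> {..<N}"
    hence "M $$ (i,j) \<ge> 0" "j < N" using nn M i unfolding nonneg_mat_def by auto
    thus "M $$ (i,j) * norm (v $ j) \<le> M $$ (i,j) * (\<tau> * u j)" using le by (simp add: mult_left_mono)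
  qed
  also have "\<dots> = \<tau> * (\<Sum>j<N. M $$ (i,j) * u j)" by (simp add: sum_distrib_left algebra_simps)
  also have "\<dots> \<le> \<tau> * (t * u i)" using ub[OF i(1)] tpos by simp
  also have "\<dots> = t * norm (v $ i)" using vi by simp
  finally have "norm \<mu> * norm (v $ i) \<le> t * norm (v $ i)" .
  moreover have "norm (v $ i) > 0" using vi tpos upos[OF i(1)] by simp
  ultimately show ?thesis by simp
qed

lemma rho_le:
  fixes M :: "real mat"
  assumes M: "M \<in> carrier_mat N N" and N: "0 < N"
  and h: "\<And>\<mu>. eigenvalue (map_mat complex_of_real M) \<mu> \<Longrightarrow> norm \<mu> \<le> t"
  shows "rho M \<le> t"
proof -
  have cM: "map_mat complex_of_real M \<in> carrier_mat N N" using M by simp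
  from spectral_radius_mem_max(1)[OF cM N] obtain \<mu> where "\<mu> \<in> spectrum (map_mat complex_of_real M)"
    "spectral_radius (map_mat complex_of_real M) = norm \<mu>" by auto
  thus ?thesis unfolding rho_def using h by (auto simp: spectrum_def)
qed

lemma rho_ge:
  fixes M :: "real mat"
  assumes M: "M \<in> carrier_mat N N" 
  and ev: "eigenvalue (map_mat complex_of_real M) \<mu>"
  shows "norm \<mu> \<le> rho M"
proof -
  have cM: "map_mat complex_of_real M \<in> carrier_mat N N" using M by simp
  have N: "0 < N" using eigenvalue_imp_nonzero_dim[OF cM ev] .
  show ?thesis unfolding rho_def
    by (rule spectral_radius_mem_max(2)[OF cM N]) (use ev in \<open>auto simp: spectrum_def\<close>)
qed

lemma rho_attained:
  fixes M :: "real mat"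
  assumes M: "M \<in> carrier_mat N N" and N: "0 < N"
  shows "\<exists>\<mu>. eigenvalue (map_mat complex_of_real M) \<mu> \<and> rho M = norm \<mu>"
proof -
  have cM: "map_mat complex_of_real M \<in> carrier_mat N N" using M by simp
  from spectral_radius_mem_max(1)[OF cM N] show ?thesis unfolding rho_def spectrum_def by auto
qed

lemma pow_mat_Suc_left: assumes A: "A \<in> carrier_mat n n" shows "A ^\<^sub>m Suc k = A * A ^\<^sub>m k"
proof (induct k)
  case 0 show ?case using A by simp
next
  case (Suc k)
  have "A ^\<^sub>m Suc (Suc k) = (A * A ^\<^sub>m k) * A" using Suc by simp
  also have "\<dots> = A * (A ^\<^sub>m k * A)" using A by (simp add: assoc_mult_mat[of _ n n _ n _ n])
  finally show ?case by simp
qed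

lemma nonneg_mult:
  fixes A B :: "real mat"
  assumes A: "A \<in> carrier_mat n k" and B: "B \<in> carrier_mat k p" and "nonneg_mat A" "nonneg_mat B"
  shows "nonneg_mat (A * B)"
  unfolding nonneg_mat_def
proof (intro allI impI)
  fix i j assume i: "i < dim_row (A * B)" and j: "j < dim_col (A * B)"
  have "(A * B) $$ (i,j) = (\<Sum>l<k. A $$ (i,l) * B $$ (l,j))"
    using A B i j by (auto simp: scalar_prod_def atLeast0LessThan intro!: sum.cong)
  also have "\<dots> \<ge> 0" using assms i j by (intro sum_nonneg mult_nonneg_nonneg, auto simp: nonneg_mat_def)
  finally show "(A * B) $$ (i,j) \<ge> 0" .
qed

lemma nonneg_pow:
  fixes A :: "real mat"
  assumes A: "A \<in> carrier_mat n n" and nn: "nonneg_mat A"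
  shows "nonneg_mat (A ^\<^sub>m k)"
proof (induct k)
  case 0 show ?case using A by (auto simp: nonneg_mat_def)
next
  case (Suc k) show ?case using nonneg_mult[OF pow_carrier_mat[OF A] A Suc nn] by simp
qed

lemma P0:
  fixes M :: "real mat"
  assumes M: "M \<in> carrier_mat N N" and nn: "nonneg_mat M"
  and bd: "\<And>k i j. i<N \<Longrightarrow> j<N \<Longrightarrow> (M ^\<^sub>m k) $$ (i,j) \<le> c" and q: "q > 1"
  shows "\<exists>u. (\<forall>i<N. u i > 0) \<and> (\<forall>i<N. (\<Sum>j<N. M$$(i,j) * u j) \<le> q * u i)"
proof -
  obtain K0 where K0: "real N * c < q ^ K0" using real_arch_pow[OF q] by auto
  define K where "K = Suc K0"
  have "q ^ K0 \<le> q ^ K" unfolding K_def using q by simp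
  with K0 have qK: "real N * c \<le> q ^ K" by simp
  define a where "a k i = (\<Sum>j<N. (M ^\<^sub>m k) $$ (i,j))" for k i
  have a0: "a 0 i = 1" if "i < N" for i
    using that M by (simp add: a_def one_mat_def sum.delta)
  have aS: "(\<Sum>l<N. M$$(i,l) * a k l) = a (Suc k) i" if i: "i < N" for i k
  proof -
    have "a (Suc k) i = (\<Sum>j<N. (M * M ^\<^sub>m k) $$ (i,j))" unfolding a_def using pow_mat_Suc_left[OF M] by simp
    also have "\<dots> = (\<Sum>j<N. \<Sum>l<N. M $$ (i,l) * (M ^\<^sub>m k) $$ (l,j))"
      using M i by (intro sum.cong refl, auto simp: scalar_prod_def atLeast0LessThan intro!: sum.cong)
    also have "\<dots> = (\<Sum>l<N. M$$(i,l) * a k l)" unfolding a_def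
      by (subst sum.swap) (simp add: sum_distrib_left)
    finally show ?thesis by simp
  qed
  have ann: "a k i \<ge> 0" if "i < N" for k i
    using nonneg_pow[OF M nn, of k] that M unfolding a_def nonneg_mat_def by (auto intro!: sum_nonneg)
  have aK: "a K i \<le> q ^ K" if "i < N" for i
  proof -
    have "a K i \<le> (\<Sum>j<N. c)" unfolding a_def using bd that by (intro sum_mono) auto
    also have "\<dots> = real N * c" by simp
    finally show ?thesis using qK by simp
  qed
  define u where "u i = (\<Sum>k<K. a k i / q ^ k)" for i
  show ?thesis
  proof (intro exI[of _ u] conjI allI impI)
    fix i assume i: "i < N"
    have "u i = a 0 i / q ^ 0 + (\<Sum>k<K0. a (Suc k) i / q ^ Suc k)"
      unfolding u_def K_def by (subst sum.lessThan_Suc_shift) simp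
    also have "\<dots> \<ge> 1" using a0[OF i] ann[OF i] q by (auto intro!: sum_nonneg)
    finally show "u i > 0" by simp
  next
    fix i assume i: "i < N"
    have "(\<Sum>j<N. M$$(i,j) * u j) = (\<Sum>k<K. (\<Sum>j<N. M$$(i,j) * a k j) / q ^ k)"
      unfolding u_def by (simp add: sum_distrib_left sum_divide_distrib algebra_simps) (subst sum.swap, simp)
    also have "\<dots> = (\<Sum>k<K. a (Suc k) i / q ^ k)" using aS[OF i] by simp
    also have "\<dots> = q * (\<Sum>k<K. a (Suc k) i / q ^ Suc k)"
      using q by (simp add: sum_distrib_left)
    also have "(\<Sum>k<K. a (Suc k) i / q ^ Suc k) = (\<Sum>k<Suc K. a k i / q ^ k) - a 0 i"
      by (subst sum.lessThan_Suc_shift) simp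
    also have "(\<Sum>k<Suc K. a k i / q ^ k) = u i + a K i / q ^ K" unfolding u_def by simp
    also have "a K i / q ^ K \<le> 1" using aK[OF i] q by simp
    hence "u i + a K i / q ^ K - a 0 i \<le> u i" using a0[OF i] by simp
    hence "q * (u i + a K i / q ^ K - a 0 i) \<le> q * u i" using q by simp
    finally show "(\<Sum>j<N. M$$(i,j) * u j) \<le> q * u i" .
  qed
qed

lemma eigenvalue_scale:
  fixes M :: "real mat"
  assumes M: "M \<in> carrier_mat N N" and l: "l > 0"
  and ev: "eigenvalue (map_mat complex_of_real ((1/l) \<cdot>\<^sub>m M)) \<mu>"
  shows "eigenvalue (map_mat complex_of_real M) (complex_of_real l * \<mu>)"
proof -
  let ?M' = "(1/l) \<cdot>\<^sub>m M"
  have M': "?M' \<in> carrier_mat N N" using M by simp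
  obtain v where evv: "eigenvector (map_mat complex_of_real ?M') v \<mu>" using ev unfolding eigenvalue_def by auto
  have v: "v \<in> carrier_vec N" and vnz: "v \<noteq> 0\<^sub>v N" and eq: "map_mat complex_of_real ?M' *\<^sub>v v = \<mu> \<cdot>\<^sub>v v"
    using evv M unfolding eigenvector_def by auto
  have "map_mat complex_of_real M *\<^sub>v v = (complex_of_real l * \<mu>) \<cdot>\<^sub>v v"
  proof (rule eq_vecI)
    fix i assume "i < dim_vec ((complex_of_real l * \<mu>) \<cdot>\<^sub>v v)"
    hence i: "i < N" using v by simp
    have "(map_mat complex_of_real M *\<^sub>v v) $ i = (\<Sum>j<N. complex_of_real (M $$ (i,j)) * v $ j)"
      by (rule cmat_mult_vec_index[OF M v i])
    also have "\<dots> = complex_of_real l * (\<Sum>j<N. complex_of_real (?M' $$ (i,j)) * v $ j)"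
      using M i l by (simp add: sum_distrib_left)
    also have "(\<Sum>j<N. complex_of_real (?M' $$ (i,j)) * v $ j) = \<mu> * v $ i"
      using cmat_mult_vec_index[OF M' v i] eq i v by (metis carrier_vecD index_smult_vec(1))
    finally show "(map_mat complex_of_real M *\<^sub>v v) $ i = ((complex_of_real l * \<mu>) \<cdot>\<^sub>v v) $ i"
      using i v by simp
  qed (use v M in simp)
  thus ?thesis using v vnz M unfolding eigenvalue_def eigenvector_def by auto
qed

lemma Ppos:
  fixes M :: "real mat"
  assumes M: "M \<in> carrier_mat N N" and N: "0 < N" and nn: "nonneg_mat M" and lt: "rho M < lam"
  shows "\<exists>u. (\<forall>i<N. u i > 0) \<and> (\<forall>i<N. (\<Sum>j<N. M$$(i,j) * u j) \<le> lam * u i)"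
proof -
  have r0: "rho M \<ge> 0" using rho_attained[OF M N] by auto
  define l where "l = (rho M + lam) / 2"
  have l: "l > 0" "rho M < l" "l < lam" using r0 lt unfolding l_def by auto
  define M' where "M' = (1/l) \<cdot>\<^sub>m M"
  have M': "M' \<in> carrier_mat N N" unfolding M'_def using M by simp
  have nn': "nonneg_mat M'" using nn l unfolding M'_def nonneg_mat_def by auto
  have "rho M' \<le> rho M / l"
  proof (rule rho_le[OF M' N])
    fix \<mu> assume "eigenvalue (map_mat complex_of_real M') \<mu>"
    from eigenvalue_scale[OF M l(1) this[unfolded M'_def]]
    have "norm (complex_of_real l * \<mu>) \<le> rho M" by (rule rho_ge[OF M])
    thus "norm \<mu> \<le> rho M / l" using l by (simp add: norm_mult field_simps)
  qed
  also have "\<dots> < 1" using l by simp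
  finally have sr: "spectral_radius (map_mat complex_of_real M') < 1" unfolding rho_def .
  have cM': "map_mat complex_of_real M' \<in> carrier_mat N N" using M' by simp
  obtain c where c: "\<And>k. norm_bound (map_mat complex_of_real M' ^\<^sub>m k) c"
    using spectral_radius_jnf_norm_bound_less_1_upper_triangular[OF cM' sr] by auto
  have bd: "(M' ^\<^sub>m k) $$ (i,j) \<le> c" if "i < N" "j < N" for k i j
  proof -
    have "map_mat complex_of_real M' ^\<^sub>m k = map_mat complex_of_real (M' ^\<^sub>m k)"
      by (rule of_real_hom.mat_hom_pow[OF M', symmetric])
    with c[of k] that M' have "norm (complex_of_real ((M' ^\<^sub>m k) $$ (i,j))) \<le> c"
      unfolding norm_bound_def by auto
    thus ?thesis by simp
  qed
  have q: "lam / l > 1" using l by simp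
  obtain u where u: "\<forall>i<N. u i > 0" "\<forall>i<N. (\<Sum>j<N. M'$$(i,j) * u j) \<le> lam / l * u i"
    using P0[OF M' nn' bd q] by blast
  show ?thesis
  proof (intro exI[of _ u] conjI allI impI)
    fix i assume i: "i < N"
    show "u i > 0" using u i by auto
    have "(\<Sum>j<N. M$$(i,j) * u j) = l * (\<Sum>j<N. M'$$(i,j) * u j)"
      unfolding M'_def using M i l by (simp add: sum_distrib_left)
    also have "\<dots> \<le> l * (lam / l * u i)" using u(2) i l by (intro mult_left_mono) auto
    also have "\<dots> = lam * u i" using l by simp
    finally show "(\<Sum>j<N. M$$(i,j) * u j) \<le> lam * u i" .
  qed
qed

lemma mono_mv:
  fixes M :: "real mat"
  assumes M: "M \<in> carrier_mat p q" and nn: "nonneg_mat M" and x: "x \<in> carrier_vec q" and y: "y \<in> carrier_vec q"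
  and le: "\<And>j. j < q \<Longrightarrow> x $ j \<le> y $ j" and i: "i < p"
  shows "(M *\<^sub>v x) $ i \<le> (M *\<^sub>v y) $ i"
  unfolding rmat_mult_vec_index[OF M x i] rmat_mult_vec_index[OF M y i]
  using nn M i le by (intro sum_mono mult_left_mono) (auto simp: nonneg_mat_def)

lemma nonneg_mv:
  fixes M :: "real mat"
  assumes M: "M \<in> carrier_mat p q" and nn: "nonneg_mat M" and x: "x \<in> carrier_vec q"
  and le: "\<And>j. j < q \<Longrightarrow> 0 \<le> x $ j" and i: "i < p"
  shows "0 \<le> (M *\<^sub>v x) $ i"
  unfolding rmat_mult_vec_index[OF M x i]
  using nn M i le by (intro sum_nonneg mult_nonneg_nonneg) (auto simp: nonneg_mat_def)

lemma pow_suc_mv: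
  assumes G: "G \<in> carrier_mat n n" and x: "x \<in> carrier_vec n"
  shows "G ^\<^sub>m Suc k *\<^sub>v x = G ^\<^sub>m k *\<^sub>v (G *\<^sub>v x)"
  using G x by (simp add: assoc_mult_mat_vec[of _ n n _ n])

lemma no_superinv:
  fixes G Ud Ad V :: "real mat"
  assumes G: "G \<in> carrier_mat n n" and Ud: "Ud \<in> carrier_mat n m" and Ad: "Ad \<in> carrier_mat n m"
  and V: "V \<in> carrier_mat m n" and GUV: "G = Ud * V"
  and key: "Ud + G * Ad = Ad"
  and nnG: "nonneg_mat G" and nnU: "nonneg_mat Ud" and nnA: "nonneg_mat Ad"
  and a: "a \<in> carrier_vec n" and anng: "\<And>i. i < n \<Longrightarrow> a $ i \<ge> 0"
  and i0: "i0 < n" "a $ i0 > 0"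
  and sup: "\<And>i. i < n \<Longrightarrow> (G *\<^sub>v a) $ i \<ge> a $ i"
  shows False
proof -
  have Gk: "(G ^\<^sub>m k *\<^sub>v a) $ i \<ge> a $ i" if "i < n" for k i
    using that
  proof (induct k arbitrary: i)
    case 0 thus ?case using a G by simp
  next
    case (Suc k)
    have "(G ^\<^sub>m k *\<^sub>v a) $ i \<le> (G ^\<^sub>m k *\<^sub>v (G *\<^sub>v a)) $ i"
      by (rule mono_mv[OF pow_carrier_mat[OF G] nonneg_pow[OF G nnG] a _ sup Suc(2)]) (use G a in simp)
    moreover have "a $ i \<le> (G ^\<^sub>m k *\<^sub>v a) $ i" using Suc by simp
    ultimately show ?case using pow_suc_mv[OF G a, of k] by simp
  qed
  define s where "s y N i = (\<Sum>k<N. (G ^\<^sub>m k *\<^sub>v (Ud *\<^sub>v y)) $ i)" for y N i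
  have ident: "s y N i + (G ^\<^sub>m N *\<^sub>v (Ad *\<^sub>v y)) $ i = (Ad *\<^sub>v y) $ i"
    if y: "y \<in> carrier_vec m" and i: "i < n" for y N i
  proof (induct N)
    case 0 show ?case unfolding s_def using Ad y i G by simp
  next
    case (Suc N)
    have "Ad *\<^sub>v y = (Ud + G * Ad) *\<^sub>v y" using key by simp
    also have "\<dots> = Ud *\<^sub>v y + G *\<^sub>v (Ad *\<^sub>v y)"
      using Ud G Ad y by (simp add: add_mult_distrib_mat_vec[of _ n m] assoc_mult_mat_vec[of _ n n _ m])
    finally have e: "Ad *\<^sub>v y = Ud *\<^sub>v y + G *\<^sub>v (Ad *\<^sub>v y)" .
    have "G ^\<^sub>m N *\<^sub>v (Ad *\<^sub>v y) = G ^\<^sub>m N *\<^sub>v (Ud *\<^sub>v y) + G ^\<^sub>m N *\<^sub>v (G *\<^sub>v (Ad *\<^sub>v y))"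
      by (subst e, rule mult_add_distrib_mat_vec[of _ n n], use G Ud Ad y in auto)
    also have "G ^\<^sub>m N *\<^sub>v (G *\<^sub>v (Ad *\<^sub>v y)) = G ^\<^sub>m Suc N *\<^sub>v (Ad *\<^sub>v y)"
      using pow_suc_mv[OF G, of "Ad *\<^sub>v y" N] Ad y by simp
    finally have "(G ^\<^sub>m N *\<^sub>v (Ad *\<^sub>v y)) $ i = (G ^\<^sub>m N *\<^sub>v (Ud *\<^sub>v y)) $ i + (G ^\<^sub>m Suc N *\<^sub>v (Ad *\<^sub>v y)) $ i"
      using G Ud Ad y i by simp
    thus ?case using Suc unfolding s_def by simp
  qed
  have sub: "s y N i \<le> (Ad *\<^sub>v y) $ i"
    if y: "y \<in> carrier_vec m" "\<And>j. j < m \<Longrightarrow> y $ j \<ge> 0" and i: "i < n" for y N i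
  proof -
    have "0 \<le> (G ^\<^sub>m N *\<^sub>v (Ad *\<^sub>v y)) $ i"
      by (rule nonneg_mv[OF pow_carrier_mat[OF G] nonneg_pow[OF G nnG] _ _ i])
         (use Ad y nonneg_mv[OF Ad nnA y(1) y(2)] in auto)
    thus ?thesis using ident[OF y(1) i, of N] by simp
  qed
  have snn: "s y N i \<ge> 0"
    if y: "y \<in> carrier_vec m" "\<And>j. j < m \<Longrightarrow> y $ j \<ge> 0" and i: "i < n" for y N i
    unfolding s_def
    by (rule sum_nonneg, rule nonneg_mv[OF pow_carrier_mat[OF G] nonneg_pow[OF G nnG] _ _ i])
      (use Ud y nonneg_mv[OF Ud nnU y(1) y(2)] in auto)
  define z where "z = V *\<^sub>v a"
  have z: "z \<in> carrier_vec m" unfolding z_def using V a by simp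
  define zp where "zp = vec m (\<lambda>l. max (z $ l) 0)"
  define zn where "zn = vec m (\<lambda>l. max (- (z $ l)) 0)"
  have zp: "zp \<in> carrier_vec m" "\<And>j. j < m \<Longrightarrow> zp $ j \<ge> 0" unfolding zp_def by auto
  have zn: "zn \<in> carrier_vec m" "\<And>j. j < m \<Longrightarrow> zn $ j \<ge> 0" unfolding zn_def by auto
  have zsplit: "z = zp - zn" unfolding zp_def zn_def using z by (intro eq_vecI) auto
  have slin: "s z N i = s zp N i - s zn N i" if i: "i < n" for N i
  proof -
    have "G ^\<^sub>m k *\<^sub>v (Ud *\<^sub>v z) = G ^\<^sub>m k *\<^sub>v (Ud *\<^sub>v zp) - G ^\<^sub>m k *\<^sub>v (Ud *\<^sub>v zn)" for k
    proof -
      have "Ud *\<^sub>v z = Ud *\<^sub>v zp - Ud *\<^sub>v zn" unfolding zsplit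
        by (rule mult_minus_distrib_mat_vec[OF Ud zp(1) zn(1)])
      thus ?thesis using mult_minus_distrib_mat_vec[OF pow_carrier_mat[OF G, of k], of "Ud *\<^sub>v zp" "Ud *\<^sub>v zn"] Ud zp zn
        by simp
    qed
    thus ?thesis unfolding s_def using i G Ud zp zn by (simp add: sum_subtractf)
  qed
  have upper: "s z N i0 \<le> (Ad *\<^sub>v zp) $ i0" for N
    using slin[OF i0(1)] sub[OF zp i0(1)] snn[OF zn i0(1)] by (simp add: algebra_simps) (smt (verit) sub zp i0)
  have lower: "s z N i0 \<ge> real N * a $ i0" for N
  proof -
    have "Ud *\<^sub>v z = G *\<^sub>v a" unfolding z_def GUV using Ud V a by (simp add: assoc_mult_mat_vec[of _ n m _ n])
    hence "s z N i0 = (\<Sum>k<N. (G ^\<^sub>m Suc k *\<^sub>v a) $ i0)" unfolding s_def using pow_suc_mv[OF G a] by simp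
    also have "\<dots> \<ge> (\<Sum>k<N. a $ i0)" by (intro sum_mono, rule Gk[OF i0(1)])
    finally show ?thesis by simp
  qed
  obtain N where N: "(Ad *\<^sub>v zp) $ i0 / a $ i0 < real N" using reals_Archimedean2 by blast
  hence "(Ad *\<^sub>v zp) $ i0 < real N * a $ i0" using i0 by (simp add: divide_less_eq)
  with upper[of N] lower[of N] show False by simp
qed

lemma mat_eq_vec:
  fixes A B :: "'a :: semiring_1 mat"
  assumes A: "A \<in> carrier_mat nr nc" and B: "B \<in> carrier_mat nr nc"
  and h: "\<And>v. v \<in> carrier_vec nc \<Longrightarrow> A *\<^sub>v v = B *\<^sub>v v"
  shows "A = B"
proof (rule eq_matI)
  fix i j assume i: "i < dim_row B" and j: "j < dim_col B"
  have "A *\<^sub>v unit_vec nc j = B *\<^sub>v unit_vec nc j" by (rule h) simp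
  hence "(A *\<^sub>v unit_vec nc j) $ i = (B *\<^sub>v unit_vec nc j) $ i" by simp
  thus "A $$ (i,j) = B $$ (i,j)" using A B i j by simp
qed (use A B in auto)

lemma proj_eq:
  fixes P Q :: "real mat"
  assumes P: "P \<in> carrier_mat k k" and Q: "Q \<in> carrier_mat k k"
  and sP: "transpose_mat P = P" and sQ: "transpose_mat Q = Q"
  and PQ: "P * Q = P" and QP: "Q * P = Q"
  shows "P = Q"
proof -
  have "P = transpose_mat (P * Q)" using PQ sP by simp
  also have "\<dots> = transpose_mat Q * transpose_mat P" by (rule transpose_mult[OF P Q])
  also have "\<dots> = Q" using sP sQ QP by simp
  finally show ?thesis .
qed

lemma vec_eq_from_diff:
  fixes x y :: "real vec"
  assumes x: "x \<in> carrier_vec k" and y: "y \<in> carrier_vec k" and d: "x - y = 0\<^sub>v k"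
  shows "x = y"
proof (rule eq_vecI)
  fix i assume i: "i < dim_vec y"
  hence "(x - y) $ i = 0" using d y by simp
  moreover have "(x - y) $ i = x $ i - y $ i" using x y i by simp
  ultimately show "x $ i = y $ i" by simp
qed (use x y in simp)

lemma mv3:
  assumes "A \<in> carrier_mat p q" "B \<in> carrier_mat q r" "C \<in> carrier_mat r s" "x \<in> carrier_vec s"
  shows "(A * B * C) *\<^sub>v x = A *\<^sub>v (B *\<^sub>v (C *\<^sub>v x))"
proof -
  have "(A * B * C) *\<^sub>v x = (A * B) *\<^sub>v (C *\<^sub>v x)"
    by (rule assoc_mult_mat_vec[of _ p r]) (use assms in auto)
  also have "\<dots> = A *\<^sub>v (B *\<^sub>v (C *\<^sub>v x))"
    by (rule assoc_mult_mat_vec[of _ p q]) (use assms in auto)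
  finally show ?thesis .
qed

lemma mv2:
  assumes "A \<in> carrier_mat p q" "B \<in> carrier_mat q r" "x \<in> carrier_vec r"
  shows "(A * B) *\<^sub>v x = A *\<^sub>v (B *\<^sub>v x)"
  by (rule assoc_mult_mat_vec[of _ p q]) (use assms in auto)

lemma proj_eq2:
  fixes P Q :: "real mat"
  assumes P: "P \<in> carrier_mat k k" and Q: "Q \<in> carrier_mat k k"
  and sP: "transpose_mat P = P" and sQ: "transpose_mat Q = Q"
  and QP: "Q * P = P" and PQ: "P * Q = Q"
  shows "P = Q"
proof -
  have "P = transpose_mat (Q * P)" using QP sP by simp
  also have "\<dots> = transpose_mat P * transpose_mat Q" by (rule transpose_mult[OF Q P])
  also have "\<dots> = Q" using sP sQ PQ by simp
  finally show ?thesis .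
qed

lemma ker_proj:
  fixes U A Ud Ad :: "real mat"
  assumes U: "U \<in> carrier_mat m n" and A: "A \<in> carrier_mat m n"
  and Ud: "Ud \<in> carrier_mat n m" and Ad: "Ad \<in> carrier_mat n m"
  and AAA: "A * Ad * A = A" and ker: "mat_kernel U = mat_kernel A"
  shows "(Ud * U) * (Ad * A) = Ud * U"
proof (rule mat_eq_vec[of _ n n])
  fix x :: "real vec" assume x: "x \<in> carrier_vec n"
  define w where "w = Ad *\<^sub>v (A *\<^sub>v x)"
  have w: "w \<in> carrier_vec n" unfolding w_def using Ad A x by simp
  have "A *\<^sub>v w = (A * Ad * A) *\<^sub>v x" unfolding w_def using mv3[OF A Ad A x] by simp
  hence Aw: "A *\<^sub>v w = A *\<^sub>v x" using AAA by simp
  have "A *\<^sub>v (x - w) = 0\<^sub>v m" using Aw A x w by (simp add: mult_minus_distrib_mat_vec[OF A x w])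
  hence "x - w \<in> mat_kernel A" using A x w unfolding mat_kernel_def by auto
  hence "U *\<^sub>v (x - w) = 0\<^sub>v m" using ker U unfolding mat_kernel_def by auto
  hence "U *\<^sub>v x - U *\<^sub>v w = 0\<^sub>v m" by (simp add: mult_minus_distrib_mat_vec[OF U x w])
  hence Uw: "U *\<^sub>v x = U *\<^sub>v w" using vec_eq_from_diff[of "U *\<^sub>v x" m "U *\<^sub>v w"] U x w by auto
  have "(Ud * U) * (Ad * A) *\<^sub>v x = (Ud * U) *\<^sub>v ((Ad * A) *\<^sub>v x)"
    by (rule mv2) (use U Ud A Ad x in auto)
  also have "\<dots> = Ud *\<^sub>v (U *\<^sub>v w)" unfolding w_def using mv2[OF Ud U] mv2[OF Ad A x] U Ud A Ad x by simp
  also have "\<dots> = (Ud * U) *\<^sub>v x" using Uw mv2[OF Ud U x] by simp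
  finally show "(Ud * U) * (Ad * A) *\<^sub>v x = (Ud * U) *\<^sub>v x" .
qed (use U A Ud Ad in auto)

lemma range_proj:
  fixes U A Ud Ad :: "real mat"
  assumes U: "U \<in> carrier_mat m n" and A: "A \<in> carrier_mat m n"
  and Ud: "Ud \<in> carrier_mat n m" and Ad: "Ad \<in> carrier_mat n m"
  and AAA: "A * Ad * A = A" and ran: "mat_range U = mat_range A"
  shows "(A * Ad) * (U * Ud) = U * Ud"
proof -
  have "(A * Ad) * U = U"
  proof (rule mat_eq_vec[of _ m n])
    fix x :: "real vec" assume x: "x \<in> carrier_vec n"
    have "U *\<^sub>v x \<in> mat_range A" using ran U x unfolding mat_range_def by auto
    then obtain y where y: "y \<in> carrier_vec n" "U *\<^sub>v x = A *\<^sub>v y" using A unfolding mat_range_def by auto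
    have "(A * Ad) * U *\<^sub>v x = (A * Ad) *\<^sub>v (U *\<^sub>v x)" by (rule mv2) (use A Ad U x in auto)
    also have "\<dots> = (A * Ad) *\<^sub>v (A *\<^sub>v y)" using y by simp
    also have "\<dots> = (A * Ad * A) *\<^sub>v y" using mv2[OF _ A y(1), of "A * Ad" m] A Ad by simp
    also have "\<dots> = U *\<^sub>v x" using AAA y by simp
    finally show "(A * Ad) * U *\<^sub>v x = U *\<^sub>v x" .
  qed (use U A Ad in auto)
  hence "(A * Ad) * U * Ud = U * Ud" by simp
  moreover have "(A * Ad) * U * Ud = (A * Ad) * (U * Ud)"
    by (rule assoc_mult_mat[of _ m m _ n _ m]) (use A Ad U Ud in auto)
  ultimately show ?thesis by simp
qed

lemma key_identity:
  fixes U A Ud Ad :: "real mat"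
  assumes U: "U \<in> carrier_mat m n" and A: "A \<in> carrier_mat m n"
  and mpU: "moore_penrose U Ud" and mpA: "moore_penrose A Ad"
  and ran: "mat_range U = mat_range A" and ker: "mat_kernel U = mat_kernel A"
  shows "Ud + (Ud * (U - A)) * Ad = Ad"
proof -
  have Ud: "Ud \<in> carrier_mat n m" using mpU U unfolding moore_penrose_def by auto
  have Ad: "Ad \<in> carrier_mat n m" using mpA A unfolding moore_penrose_def by auto
  note mpU' = mpU[unfolded moore_penrose_def] and mpA' = mpA[unfolded moore_penrose_def]
  have i: "Ud * U = Ad * A"
  proof (rule proj_eq[of _ n])
    show "Ud * U * (Ad * A) = Ud * U" by (rule ker_proj[OF U A Ud Ad]) (use mpA' ker in auto)
    show "Ad * A * (Ud * U) = Ad * A" by (rule ker_proj[OF A U Ad Ud]) (use mpU' ker in auto)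
  qed (use U A Ud Ad mpU' mpA' in auto)
  have ii: "U * Ud = A * Ad"
  proof (rule proj_eq2[of _ m])
    show "U * Ud * (A * Ad) = A * Ad" by (rule range_proj[OF A U Ad Ud]) (use mpU' ran in auto)
    show "A * Ad * (U * Ud) = U * Ud" by (rule range_proj[OF U A Ud Ad]) (use mpA' ran in auto)
  qed (use U A Ud Ad mpU' mpA' in auto)
  have "(Ud * (U - A)) * Ad = Ud * U * Ad - Ud * A * Ad"
    using U A Ud Ad by (simp add: mult_minus_distrib_mat[of _ n m _ n] minus_mult_distrib_mat[of _ n n _ _ m])
  also have "Ud * U * Ad = Ad * A * Ad" using i by simp
  also have "\<dots> = Ad" using mpA' by simp
  also have "Ud * A * Ad = Ud * (A * Ad)" using Ud A Ad by (simp add: assoc_mult_mat[of _ n m _ n _ m])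
  also have "\<dots> = Ud * (U * Ud)" using ii by simp
  also have "\<dots> = Ud" using mpU' Ud U by (simp add: assoc_mult_mat[of _ n m _ n _ m])
  finally have "(Ud * (U - A)) * Ad = Ad - Ud" .
  thus ?thesis using Ud Ad by (intro eq_matI) auto
qed

lemma mat_mult_index:
  fixes A B :: "real mat"
  assumes A: "A \<in> carrier_mat p k" and B: "B \<in> carrier_mat k q" and i: "i < p" and j: "j < q"
  shows "(A * B) $$ (i,j) = (\<Sum>l<k. A $$ (i,l) * B $$ (l,j))"
  using A B i j by (auto simp: scalar_prod_def atLeast0LessThan intro!: sum.cong)

lemma sum_delta_mult:
  fixes n :: nat
  assumes "i < n" shows "(\<Sum>j<n. (if i = j then 1 else 0) * f j) = (f i :: real)"
proof -
  have "(\<Sum>j<n. (if i = j then 1 else 0) * f j) = (\<Sum>j<n. if i = j then f j else 0)" by (rule sum.cong) auto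
  also have "\<dots> = f i" using assms by (simp add: sum.delta sum.delta')
  finally show ?thesis .
qed

lemma T_nonneg:
  fixes X Z :: "real mat"
  assumes X: "X \<in> carrier_mat n n" and Z: "Z \<in> carrier_mat n n"
  and nX: "nonneg_mat X" and nZ: "nonpos_mat Z"
  shows "nonneg_mat (four_block_mat X (- Z) (1\<^sub>m n) (0\<^sub>m n n))"
  using X Z nX nZ unfolding nonneg_mat_def nonpos_mat_def by auto

lemma partA:
  fixes X1 Z1 G :: "real mat"
  assumes n: "0 < n" and X1: "X1 \<in> carrier_mat n n" and Z1: "Z1 \<in> carrier_mat n n"
  and nX: "nonneg_mat X1" and nZ: "nonpos_mat Z1"
  and G: "G \<in> carrier_mat n n" and Gij: "\<And>i j. i < n \<Longrightarrow> j < n \<Longrightarrow> G $$ (i,j) = X1 $$ (i,j) - Z1 $$ (i,j)"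
  and nosup: "\<And>a. a \<in> carrier_vec n \<Longrightarrow> (\<forall>i<n. a $ i \<ge> 0) \<Longrightarrow> (\<forall>i<n. (G *\<^sub>v a) $ i \<ge> a $ i) \<Longrightarrow> (\<forall>i<n. a $ i = 0)"
  shows "rho (four_block_mat X1 (- Z1) (1\<^sub>m n) (0\<^sub>m n n)) < 1"
proof (rule ccontr)
  define T where "T = four_block_mat X1 (- Z1) (1\<^sub>m n) (0\<^sub>m n n)"
  have T: "T \<in> carrier_mat (n+n) (n+n)" unfolding T_def using X1 by simp
  have nT: "nonneg_mat T" unfolding T_def by (rule T_nonneg[OF X1 Z1 nX nZ])
  assume "\<not> rho (four_block_mat X1 (- Z1) (1\<^sub>m n) (0\<^sub>m n n)) < 1"
  hence r1: "rho T \<ge> 1" unfolding T_def by simp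
  obtain \<mu> where ev: "eigenvalue (map_mat complex_of_real T) \<mu>" and rmu: "rho T = norm \<mu>"
    using rho_attained[OF T] n by auto
  obtain v where evv: "eigenvector (map_mat complex_of_real T) v \<mu>" using ev unfolding eigenvalue_def by auto
  have v: "v \<in> carrier_vec (n+n)" and vnz: "v \<noteq> 0\<^sub>v (n+n)" using evv T unfolding eigenvector_def by auto
  define s where "s = norm \<mu>"
  have s1: "s \<ge> 1" using r1 rmu s_def by simp
  define a where "a = vec n (\<lambda>i. norm (v $ i))"
  define b where "b = vec n (\<lambda>i. norm (v $ (n + i)))"
  have a: "a \<in> carrier_vec n" unfolding a_def by simp
  have ann: "\<forall>i<n. a $ i \<ge> 0" unfolding a_def by simp
  have bnn: "b $ i \<ge> 0" if "i < n" for i unfolding b_def using that by simp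
  have top: "s * a $ i \<le> (\<Sum>j<n. X1 $$ (i,j) * a $ j) + (\<Sum>j<n. (- Z1 $$ (i,j)) * b $ j)" if i: "i < n" for i
  proof -
    have "s * a $ i \<le> (\<Sum>j<n+n. T $$ (i,j) * norm (v $ j))"
      using eig_abs[OF T nT evv, of i] i unfolding a_def s_def by simp
    also have "\<dots> = (\<Sum>j<n. X1 $$ (i,j) * a $ j) + (\<Sum>j<n. (- Z1 $$ (i,j)) * b $ j)"
      unfolding sum_split_add T_def a_def b_def using i X1 Z1 by simp
    finally show ?thesis .
  qed
  have bot: "s * b $ i \<le> a $ i" if i: "i < n" for i
  proof -
    have "s * b $ i \<le> (\<Sum>j<n+n. T $$ (n+i,j) * norm (v $ j))"
      using eig_abs[OF T nT evv, of "n+i"] i unfolding b_def s_def by simp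
    also have "\<dots> = a $ i"
      unfolding sum_split_add T_def a_def using i X1 Z1 by (simp add: sum_delta_mult)
    finally show ?thesis .
  qed
  have ba: "b $ i \<le> a $ i" if i: "i < n" for i
  proof -
    have "b $ i \<le> s * b $ i" using mult_right_mono[OF s1, of "b $ i"] bnn[OF i] by simp
    thus ?thesis using bot[OF i] by simp
  qed
  have sup: "\<forall>i<n. (G *\<^sub>v a) $ i \<ge> a $ i"
  proof (intro allI impI)
    fix i assume i: "i < n"
    have "a $ i \<le> s * a $ i" using mult_right_mono[OF s1, of "a $ i"] ann i by simp
    also have "\<dots> \<le> (\<Sum>j<n. X1 $$ (i,j) * a $ j) + (\<Sum>j<n. (- Z1 $$ (i,j)) * b $ j)" by (rule top[OF i])
    also have "(\<Sum>j<n. (- Z1 $$ (i,j)) * b $ j) \<le> (\<Sum>j<n. (- Z1 $$ (i,j)) * a $ j)"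
      using nZ Z1 i ba unfolding nonpos_mat_def by (intro sum_mono mult_left_mono) auto
    also have "(\<Sum>j<n. X1 $$ (i,j) * a $ j) + (\<Sum>j<n. (- Z1 $$ (i,j)) * a $ j) = (G *\<^sub>v a) $ i"
      unfolding rmat_mult_vec_index[OF G a i] sum.distrib[symmetric] using Gij i by (intro sum.cong) (auto simp: left_diff_distrib)
    finally show "(G *\<^sub>v a) $ i \<ge> a $ i" by simp
  qed
  have az: "\<forall>i<n. a $ i = 0" by (rule nosup[OF a ann sup])
  have "v = 0\<^sub>v (n+n)"
  proof (rule eq_vecI)
    fix k assume "k < dim_vec (0\<^sub>v (n+n) :: complex vec)"
    hence k: "k < n + n" by simp
    show "v $ k = 0\<^sub>v (n+n) $ k"
    proof (cases "k < n")
      case True thus ?thesis using az k unfolding a_def by auto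
    next
      case False
      define i where "i = k - n"
      have i: "i < n" "k = n + i" using False k unfolding i_def by auto
      have "b $ i \<le> 0" using ba[OF i(1)] az i by simp
      thus ?thesis using i unfolding b_def by simp
    qed
  qed (use v in simp)
  with vnz show False by simp
qed

lemma sum_swap_helper:
  fixes A :: "nat \<Rightarrow> real"
  shows "(\<Sum>j<n. (\<Sum>l<n. A l * B l j) * c j) = (\<Sum>l<n. A l * (\<Sum>j<n. B l j * c j))"
proof -
  have "(\<Sum>j<n. (\<Sum>l<n. A l * B l j) * c j) = (\<Sum>j<n. \<Sum>l<n. A l * (B l j * c j))"
    by (simp add: sum_distrib_right mult.assoc)
  also have "\<dots> = (\<Sum>l<n. \<Sum>j<n. A l * (B l j * c j))" by (rule sum.swap)
  also have "\<dots> = (\<Sum>l<n. A l * (\<Sum>j<n. B l j * c j))" by (simp add: sum_distrib_left)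
  finally show ?thesis .
qed

lemma partB:
  fixes X1 Z1 X2 Z2 :: "real mat"
  assumes n: "0 < n" and X1: "X1 \<in> carrier_mat n n" and Z1: "Z1 \<in> carrier_mat n n"
  and X2: "X2 \<in> carrier_mat n n" and Z2: "Z2 \<in> carrier_mat n n"
  and nX1: "nonneg_mat X1" and nX2: "nonneg_mat X2" and nZ1: "nonpos_mat Z1" and nZ2: "nonpos_mat Z2"
  and le1: "\<And>i j. i < n \<Longrightarrow> j < n \<Longrightarrow> X2 $$ (i,j) \<le> X1 $$ (i,j)"
  and le2: "\<And>i j. i < n \<Longrightarrow> j < n \<Longrightarrow> Z1 $$ (i,j) \<le> Z2 $$ (i,j)"
  and r1: "rho (four_block_mat X1 (- Z1) (1\<^sub>m n) (0\<^sub>m n n)) < 1"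
  shows "rho (four_block_mat (X2 - Z2 * X1) (Z2 * Z1) (1\<^sub>m n) (0\<^sub>m n n))
     \<le> rho (four_block_mat X1 (- Z1) (1\<^sub>m n) (0\<^sub>m n n))"
proof (rule ccontr)
  define T where "T = four_block_mat X1 (- Z1) (1\<^sub>m n) (0\<^sub>m n n)"
  define W where "W = four_block_mat (X2 - Z2 * X1) (Z2 * Z1) (1\<^sub>m n) (0\<^sub>m n n)"
  have T: "T \<in> carrier_mat (n+n) (n+n)" unfolding T_def using X1 by simp
  have TLc: "X2 - Z2 * X1 \<in> carrier_mat n n" using X2 Z2 X1 by (metis minus_carrier_mat mult_carrier_mat)
  have W: "W \<in> carrier_mat (n+n) (n+n)" unfolding W_def using four_block_carrier_mat[OF TLc zero_carrier_mat[of n n]] by simp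
  have nT: "nonneg_mat T" unfolding T_def by (rule T_nonneg[OF X1 Z1 nX1 nZ1])
  have Z2X1: "(Z2 * X1) $$ (i,j) = (\<Sum>l<n. Z2 $$ (i,l) * X1 $$ (l,j))" if "i < n" "j < n" for i j
    by (rule mat_mult_index[OF Z2 X1 that])
  have Z2Z1: "(Z2 * Z1) $$ (i,j) = (\<Sum>l<n. Z2 $$ (i,l) * Z1 $$ (l,j))" if "i < n" "j < n" for i j
    by (rule mat_mult_index[OF Z2 Z1 that])
  have TL: "(X2 - Z2 * X1) $$ (i,j) = X2 $$ (i,j) - (\<Sum>l<n. Z2 $$ (i,l) * X1 $$ (l,j))" if "i < n" "j < n" for i j
    using Z2X1[OF that] that X2 Z2 X1 by simp
  have nW: "nonneg_mat W" unfolding nonneg_mat_def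
  proof (intro allI impI)
    fix i j assume i: "i < dim_row W" and j: "j < dim_col W"
    have tl: "(X2 - Z2 * X1) $$ (i,j) \<ge> 0" if "i < n" "j < n" for i j
    proof -
      have "(\<Sum>l<n. Z2 $$ (i,l) * X1 $$ (l,j)) \<le> 0"
        using nZ2 nX1 that Z2 X1 unfolding nonneg_mat_def nonpos_mat_def
        by (intro sum_nonpos mult_nonpos_nonneg) auto
      moreover have "X2 $$ (i,j) \<ge> 0" using nX2 X2 that unfolding nonneg_mat_def by auto
      ultimately show ?thesis using TL[OF that] by simp
    qed
    have tr: "(Z2 * Z1) $$ (i,j) \<ge> 0" if "i < n" "j < n" for i j
      unfolding Z2Z1[OF that]
      using nZ2 nZ1 that Z2 Z1 unfolding nonpos_mat_def
      by (intro sum_nonneg mult_nonpos_nonpos) auto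
    show "W $$ (i,j) \<ge> 0" using i j W tl tr X2 Z2 X1 Z1 unfolding W_def by auto
  qed
  define r where "r = rho T"
  define sW where "sW = rho W"
  assume "\<not> rho (four_block_mat (X2 - Z2 * X1) (Z2 * Z1) (1\<^sub>m n) (0\<^sub>m n n))
     \<le> rho (four_block_mat X1 (- Z1) (1\<^sub>m n) (0\<^sub>m n n))"
  hence lt: "r < sW" unfolding r_def sW_def T_def W_def by simp
  have r0: "r \<ge> 0" using rho_attained[OF T] n unfolding r_def by auto
  have r1': "r < 1" using r1 unfolding r_def T_def .
  define lam where "lam = min ((r + sW)/2) ((r+1)/2)"
  have lam: "r < lam" "lam < sW" "lam \<le> 1" "0 < lam" using lt r0 r1' unfolding lam_def by (auto simp: min_def)
  obtain u where upos: "\<forall>i<n+n. u i > 0" and ub: "\<forall>i<n+n. (\<Sum>j<n+n. T$$(i,j) * u j) \<le> lam * u i"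
    using Ppos[OF T _ nT, of lam] n lam unfolding r_def by auto
  define SX1 where "SX1 l = (\<Sum>j<n. X1$$(l,j) * u j)" for l
  define SZ1 where "SZ1 l = (\<Sum>j<n. Z1$$(l,j) * u j)" for l
  define SX2 where "SX2 l = (\<Sum>j<n. X2$$(l,j) * u j)" for l
  define SZ2 where "SZ2 l = (\<Sum>j<n. Z2$$(l,j) * u j)" for l
  have top: "SX1 i + (\<Sum>j<n. (- Z1$$(i,j)) * u (n+j)) \<le> lam * u i" if i: "i < n" for i
  proof -
    have "(\<Sum>j<n+n. T$$(i,j) * u j) = SX1 i + (\<Sum>j<n. (- Z1$$(i,j)) * u (n+j))"
      unfolding sum_split_add T_def SX1_def using i X1 Z1 by simp
    moreover have "i < n + n" using i by simp
    ultimately show ?thesis using ub by metis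
  qed
  have bot: "u i \<le> lam * u (n+i)" if i: "i < n" for i
  proof -
    have "(\<Sum>j<n+n. T$$(n+i,j) * u j) = u i"
      unfolding sum_split_add T_def using i X1 Z1 by (simp add: sum_delta_mult)
    thus ?thesis using ub i by (metis add_less_cancel_left)
  qed
  have unn: "u j \<ge> 0" if "j < n" for j using upos that by (simp add: less_imp_le trans_less_add1)
  have star: "lam * SX1 l - SZ1 l \<le> lam^2 * u l" if l: "l < n" for l
  proof -
    have "- SZ1 l = (\<Sum>j<n. (- Z1$$(l,j)) * u j)" unfolding SZ1_def by (simp add: sum_negf[symmetric])
    also have "\<dots> \<le> (\<Sum>j<n. (- Z1$$(l,j)) * (lam * u (n+j)))"
      using nZ1 Z1 l bot unfolding nonpos_mat_def by (intro sum_mono mult_left_mono) auto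
    also have "\<dots> = lam * (\<Sum>j<n. (- Z1$$(l,j)) * u (n+j))" by (simp add: sum_distrib_left algebra_simps)
    finally have "lam * SX1 l - SZ1 l \<le> lam * (SX1 l + (\<Sum>j<n. (- Z1$$(l,j)) * u (n+j)))"
      by (simp add: algebra_simps)
    also have "\<dots> \<le> lam * (lam * u l)" using top[OF l] lam by (intro mult_left_mono) auto
    finally show ?thesis by (simp add: power2_eq_square)
  qed
  define uW where "uW k = (if k < n then lam * u k else u (k - n))" for k
  have uWpos: "uW i > 0" if "i < n+n" for i
    using upos that lam unfolding uW_def by auto
  have Wb: "(\<Sum>j<n+n. W$$(i,j) * uW j) \<le> lam * uW i" if i: "i < n+n" for i
  proof (cases "i < n")
    case True
    have "(\<Sum>j<n+n. W$$(i,j) * uW j) = (\<Sum>j<n. (X2 - Z2 * X1) $$ (i,j) * (lam * u j)) + (\<Sum>j<n. (Z2 * Z1) $$ (i,j) * u j)"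
      unfolding sum_split_add W_def uW_def using True X1 X2 Z1 Z2 by simp
    also have "(\<Sum>j<n. (X2 - Z2 * X1) $$ (i,j) * (lam * u j)) = (\<Sum>j<n. X2 $$ (i,j) * (lam * u j)) - (\<Sum>j<n. (\<Sum>l<n. Z2 $$ (i,l) * X1 $$ (l,j)) * (lam * u j))"
      using TL True by (simp add: sum_subtractf[symmetric] left_diff_distrib)
    also have "(\<Sum>j<n. (\<Sum>l<n. Z2 $$ (i,l) * X1 $$ (l,j)) * (lam * u j)) = (\<Sum>l<n. Z2 $$ (i,l) * (lam * SX1 l))"
      unfolding sum_swap_helper SX1_def by (simp add: sum_distrib_left algebra_simps)
    also have "(\<Sum>j<n. X2 $$ (i,j) * (lam * u j)) = lam * SX2 i" unfolding SX2_def by (simp add: sum_distrib_left algebra_simps)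
    also have "(\<Sum>j<n. (Z2 * Z1) $$ (i,j) * u j) = (\<Sum>l<n. Z2 $$ (i,l) * SZ1 l)"
      using Z2Z1 True unfolding SZ1_def by (simp add: sum_swap_helper)
    finally have eq: "(\<Sum>j<n+n. W$$(i,j) * uW j) = lam * SX2 i - (\<Sum>l<n. Z2 $$ (i,l) * (lam * SX1 l - SZ1 l))"
      by (simp add: sum_subtractf right_diff_distrib)
    have "(\<Sum>l<n. Z2 $$ (i,l) * (lam^2 * u l)) \<le> (\<Sum>l<n. Z2 $$ (i,l) * (lam * SX1 l - SZ1 l))"
      using nZ2 Z2 True star unfolding nonpos_mat_def by (intro sum_mono mult_left_mono_neg) auto
    moreover have "(\<Sum>l<n. Z2 $$ (i,l) * (lam^2 * u l)) = lam^2 * SZ2 i" unfolding SZ2_def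
      by (simp add: sum_distrib_left algebra_simps)
    ultimately have "(\<Sum>j<n+n. W$$(i,j) * uW j) \<le> lam * SX2 i - lam^2 * SZ2 i" using eq by simp
    also have "SX2 i \<le> SX1 i" unfolding SX1_def SX2_def using le1 True unn by (intro sum_mono mult_right_mono) auto
    hence "lam * SX2 i \<le> lam * SX1 i" using lam by simp
    hence "lam * SX2 i - lam^2 * SZ2 i \<le> lam * SX1 i - lam^2 * SZ2 i" by simp
    also have "SZ1 i \<le> SZ2 i" unfolding SZ1_def SZ2_def using le2 True unn by (intro sum_mono mult_right_mono) auto
    hence "- (lam^2 * SZ2 i) \<le> - (lam^2 * SZ1 i)" by (simp add: mult_left_mono)
    hence "lam * SX1 i - lam^2 * SZ2 i \<le> lam * SX1 i - lam^2 * SZ1 i" by simp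
    also have "SZ1 i \<le> 0" unfolding SZ1_def using nZ1 Z1 True unn unfolding nonpos_mat_def
      by (intro sum_nonpos mult_nonpos_nonneg) auto
    hence "- (lam^2 * SZ1 i) \<le> - SZ1 i" using lam by (simp add: mult_le_cancel_right1 power_le_one)
    hence "lam * SX1 i - lam^2 * SZ1 i \<le> lam * SX1 i - SZ1 i" by simp
    also have "\<dots> \<le> lam^2 * u i" by (rule star[OF True])
    also have "\<dots> = lam * uW i" unfolding uW_def using True by (simp add: power2_eq_square)
    finally show ?thesis .
  next
    case False
    define i' where "i' = i - n"
    have i': "i' < n" "i = n + i'" using False i unfolding i'_def by auto
    have "(\<Sum>j<n+n. W$$(i,j) * uW j) = lam * u i'"
      unfolding sum_split_add W_def uW_def using i' X1 X2 Z1 Z2 by (simp add: sum_delta_mult)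
    also have "\<dots> = lam * uW i" unfolding uW_def using i' by simp
    finally show ?thesis by simp
  qed
  have "rho W \<le> lam"
    by (rule rho_le[OF W]) (use n eig_upper[OF W nW uWpos Wb] in auto)
  with lam show False unfolding sW_def by simp
qed

lemma nonpos_mult:
  fixes A B :: "real mat"
  assumes A: "A \<in> carrier_mat n k" and B: "B \<in> carrier_mat k p" and "nonneg_mat A" "nonpos_mat B"
  shows "nonpos_mat (A * B)"
  unfolding nonpos_mat_def
proof (intro allI impI)
  fix i j assume i: "i < dim_row (A * B)" and j: "j < dim_col (A * B)"
  have "(A * B) $$ (i,j) = (\<Sum>l<k. A $$ (i,l) * B $$ (l,j))"
    using A B i j by (auto simp: scalar_prod_def atLeast0LessThan intro!: sum.cong)
  also have "\<dots> \<le> 0" using assms i j by (intro sum_nonpos mult_nonneg_nonpos, auto simp: nonneg_mat_def nonpos_mat_def)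
  finally show "(A * B) $$ (i,j) \<le> 0" .
qed

theorem theorem3p4:
  fixes A P1 R1 S1 P2 R2 S2 Ad P1d P2d Ahd :: "real mat" and m n :: nat
  assumes "0 < n"
    and "A \<in> carrier_mat m n"
    and "moore_penrose A Ad" and "nonneg_mat Ad"
    and "double_proper_weak_regular A P1 R1 S1 P1d"
    and "double_proper_regular A P2 R2 S2 P2d"
    and "mat_kernel P2 \<subseteq> mat_kernel S2"
    and "mat_range S2 \<subseteq> mat_range P2"
    and "1 \<notin> rspectrum (S2 * P1d)"
    and "moore_penrose ((1\<^sub>m m - S2 * P1d) * A) Ahd" and "nonneg_mat Ahd"
    and "mat_le (P2d * R2) (P1d * R1)"
    and "mat_le (P1d * S1) (P2d * S2)"
  shows "rho (four_block_mat (P2d * R2 - P2d * S2 * P1d * R1) (P2d * S2 * P1d * S1) (1\<^sub>m n) (0\<^sub>m n n))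
           \<le> rho (four_block_mat (P1d * R1) (- (P1d * S1)) (1\<^sub>m n) (0\<^sub>m n n))
       \<and> rho (four_block_mat (P1d * R1) (- (P1d * S1)) (1\<^sub>m n) (0\<^sub>m n n)) < 1"
proof -
  note n = assms(1) and A = assms(2)
  have sp1: "double_proper_splitting A P1 R1 S1" and mp1: "moore_penrose P1 P1d"
    and nP1d: "nonneg_mat P1d" and nX1: "nonneg_mat (P1d * R1)" and nZ1: "nonpos_mat (P1d * S1)"
    using assms(5) unfolding double_proper_weak_regular_def by auto
  have sp2: "double_proper_splitting A P2 R2 S2" and mp2: "moore_penrose P2 P2d"
    and nP2d: "nonneg_mat P2d" and nR2: "nonneg_mat R2" and nS2: "nonpos_mat S2"
    using assms(6) unfolding double_proper_regular_def by auto
  have P1: "P1 \<in> carrier_mat m n" and R1: "R1 \<in> carrier_mat m n" and S1: "S1 \<in> carrier_mat m n"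
    and AP: "A = P1 - R1 + S1" and ran1: "mat_range P1 = mat_range A" and ker1: "mat_kernel P1 = mat_kernel A"
    using sp1 A unfolding double_proper_splitting_def by auto
  have P2: "P2 \<in> carrier_mat m n" and R2: "R2 \<in> carrier_mat m n" and S2: "S2 \<in> carrier_mat m n"
    using sp2 A unfolding double_proper_splitting_def by auto
  have P1d: "P1d \<in> carrier_mat n m" using mp1 P1 unfolding moore_penrose_def by auto
  have P2d: "P2d \<in> carrier_mat n m" using mp2 P2 unfolding moore_penrose_def by auto
  have Ad: "Ad \<in> carrier_mat n m" using assms(3) A unfolding moore_penrose_def by auto
  define X1 where "X1 = P1d * R1"
  define Z1 where "Z1 = P1d * S1"
  define X2 where "X2 = P2d * R2"
  define Z2 where "Z2 = P2d * S2"
  have X1: "X1 \<in> carrier_mat n n" unfolding X1_def using P1d R1 by simp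
  have Z1: "Z1 \<in> carrier_mat n n" unfolding Z1_def using P1d S1 by simp
  have X2: "X2 \<in> carrier_mat n n" unfolding X2_def using P2d R2 by simp
  have Z2: "Z2 \<in> carrier_mat n n" unfolding Z2_def using P2d S2 by simp
  have nX2: "nonneg_mat X2" unfolding X2_def by (rule nonneg_mult[OF P2d R2 nP2d nR2])
  have nZ2: "nonpos_mat Z2" unfolding Z2_def by (rule nonpos_mult[OF P2d S2 nP2d nS2])
  have le1: "X2 $$ (i,j) \<le> X1 $$ (i,j)" if "i < n" "j < n" for i j
    using assms(12) that P1d R1 P2d R2 unfolding mat_le_def X1_def X2_def by auto
  have le2: "Z1 $$ (i,j) \<le> Z2 $$ (i,j)" if "i < n" "j < n" for i j
    using assms(13) that P1d S1 P2d S2 unfolding mat_le_def Z1_def Z2_def by auto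
  have e1: "P2d * S2 * P1d * R1 = Z2 * X1" unfolding Z2_def X1_def
    by (rule assoc_mult_mat[of _ n n _ m _ n]) (use P2d S2 P1d R1 in auto)
  have e2: "P2d * S2 * P1d * S1 = Z2 * Z1" unfolding Z2_def Z1_def
    by (rule assoc_mult_mat[of _ n n _ m _ n]) (use P2d S2 P1d S1 in auto)
  define G where "G = P1d * (P1 - A)"
  have G: "G \<in> carrier_mat n n" unfolding G_def using P1d P1 A by (metis minus_carrier_mat mult_carrier_mat)
  have key: "P1d + G * Ad = Ad" unfolding G_def by (rule key_identity[OF P1 A mp1 assms(3) ran1 ker1])
  have PA: "P1 - A = R1 - S1" unfolding AP using P1 R1 S1 by (intro eq_matI) auto
  have GXZ: "G = X1 - Z1" unfolding G_def PA X1_def Z1_def by (rule mult_minus_distrib_mat[OF P1d R1 S1])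
  have Gij: "G $$ (i,j) = X1 $$ (i,j) - Z1 $$ (i,j)" if "i < n" "j < n" for i j
    unfolding GXZ using that X1 Z1 by simp
  have nG: "nonneg_mat G" unfolding nonneg_mat_def
  proof (intro allI impI)
    fix i j assume "i < dim_row G" "j < dim_col G"
    hence ij: "i < n" "j < n" using G by auto
    have "X1 $$ (i,j) \<ge> 0" using nX1 ij P1d R1 unfolding X1_def nonneg_mat_def by auto
    moreover have "Z1 $$ (i,j) \<le> 0" using nZ1 ij P1d S1 unfolding Z1_def nonpos_mat_def by auto
    ultimately show "G $$ (i,j) \<ge> 0" using Gij[OF ij] by simp
  qed
  have nosup: "\<forall>i<n. a $ i = 0"
    if a: "a \<in> carrier_vec n" and ann: "\<forall>i<n. a $ i \<ge> 0" and sup: "\<forall>i<n. (G *\<^sub>v a) $ i \<ge> a $ i" for a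
  proof (rule ccontr)
    assume "\<not> (\<forall>i<n. a $ i = 0)"
    then obtain i0 where i0: "i0 < n" "a $ i0 \<noteq> 0" by auto
    hence i0': "a $ i0 > 0" using ann by (simp add: order_neq_le_trans)
    have V: "P1 - A \<in> carrier_mat m n" using P1 A by (metis minus_carrier_mat)
    show False
      by (rule no_superinv[OF G P1d Ad V G_def key nG nP1d assms(4) a _ i0(1) i0'])
         (use ann sup in auto)
  qed
  have ra: "rho (four_block_mat X1 (- Z1) (1\<^sub>m n) (0\<^sub>m n n)) < 1"
    by (rule partA[OF n X1 Z1 nX1[folded X1_def] nZ1[folded Z1_def] G Gij nosup])
  have rb: "rho (four_block_mat (X2 - Z2 * X1) (Z2 * Z1) (1\<^sub>m n) (0\<^sub>m n n))
     \<le> rho (four_block_mat X1 (- Z1) (1\<^sub>m n) (0\<^sub>m n n))"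
    by (rule partB[OF n X1 Z1 X2 Z2 nX1[folded X1_def] nX2 nZ1[folded Z1_def] nZ2 le1 le2 ra])
  show ?thesis using ra rb unfolding e1 e2 X1_def Z1_def X2_def Z2_def by simp
qed

end
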